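(* Assume $M$ is nonempty. Then $M$ is connected if and only if for each $k\in\{1,\dots,d\}$ there is a point $(a,b)\in K$ with $a_k=|b_k|$.
   Context: Let $\mathbb C^{d,d}=\mathbb C^d\times\mathbb C^d$ with coordinates $(z,w)$; $\mathbb T^d$ acts by $(z_k,w_k)\mapsto(e^{i\theta_k}z_k,e^{i\theta_k}w_k)$. Fix $u_1,\dots,u_d\in\mathbb Z^n$ spanning $\mathbb R^n$; let $\beta\colon\mathbb R^d\to\mathbb R^n$, $e_k\mapsto u_k$, $\mathfrak n=\ker\beta$ with inclusion $\iota$, and $N\subset\mathbb T^d$ the kernel of the induced homomorphism $\mathbb T^d\to\mathbb T^n$. Identify $\mathbb R^d$ with its dual via the standard inner product. Fix real constants $\lambda^{(j)}_k$, put $\lambda^{(c)}_k=\lambda^{(2)}_k+i\lambda^{(3)}_k$, and let $\mu=(\mu_I,\mu_S,\mu_T)$ with $\mu_I(z,w)=\sum_k(\tfrac12(|z_k|^2+|w_k|^2)+\lambda^{(1)}_k)\iota^*e_k$, $(\mu_S+i\mu_T)(z,w)=\sum_k(iz_k\bar w_k+\lambda^{(c)}_k)\iota^*e_k$; $M=\mu^{-1}(0)/N$. For $(a,b)\in\mathbb R^n\times\mathbb C^n$, $a_k=\langle a,u_k\rangle-\lambda^{(1)}_k$, $b_k=\langle b,u_k\rangle-\lambda^{(c)}_k$, and $K=\{(a,b): a_k\geqslant|b_k|\ \forall k\}$ (this is the image of the moment map $\phi$ of the $\mathbb T^d/N$-action on $M$). *)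

theory Defs
  imports "HOL-Analysis.Analysis"
begin

definition quot_topology :: "'a topology \<Rightarrow> ('a \<Rightarrow> 'b) \<Rightarrow> 'b topology" where
  "quot_topology X f =
     topology (\<lambda>U. U \<subseteq> f ` topspace X \<and> openin X {x \<in> topspace X. f x \<in> U})"

lemma istopology_quot: "istopology (\<lambda>U. U \<subseteq> f ` topspace X \<and> openin X {x \<in> topspace X. f x \<in> U})"
proof -
  have 1: "{x \<in> topspace X. f x \<in> S \<inter> T} = {x \<in> topspace X. f x \<in> S} \<inter> {x \<in> topspace X. f x \<in> T}" for S T
    by blast
  have 2: "{x \<in> topspace X. f x \<in> \<Union>K} = (\<Union>S\<in>K. {x \<in> topspace X. f x \<in> S})" for K
    by blast
  show ?thesis
    unfolding istopology_def
    by (auto simp only: 1 2 intro!: openin_Int openin_Union)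
qed

lemma openin_quot_topology:
  "openin (quot_topology X f) U \<longleftrightarrow> U \<subseteq> f ` topspace X \<and> openin X {x \<in> topspace X. f x \<in> U}"
  unfolding quot_topology_def by (simp add: topology_inverse'[OF istopology_quot])

text \<open>The setting. Index type 'd = {1..d}, 'n = {1..n}.
  u k :: int^'n are the weights; lam1, lam2, lam3 the real constants.\<close>

definition torus :: "(complex^'d) set" where
  "torus = {t. \<forall>k. cmod (t $ k) = 1}"

text \<open>N = kernel of the homomorphism T^d \<rightarrow> T^n induced by beta (e_k \<mapsto> u_k):
  (e^{i theta_k})_k \<mapsto> (e^{i <theta, column j>})_j = (\<Prod>k t_k^{u_k j})_j.\<close>
definition Nsub :: "('d::finite \<Rightarrow> int^'n::finite) \<Rightarrow> (complex^'d) set" where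
  "Nsub u = {t \<in> torus. \<forall>j. (\<Prod>k\<in>UNIV. (t $ k) powi (u k $ j)) = 1}"

definition tact :: "complex^'d \<Rightarrow> ((complex^'d) \<times> (complex^'d)) \<Rightarrow> ((complex^'d) \<times> (complex^'d))" where
  "tact t p = ((\<chi> k. t $ k * fst p $ k), (\<chi> k. t $ k * snd p $ k))"

definition beta :: "('d::finite \<Rightarrow> int^'n::finite) \<Rightarrow> real^'d \<Rightarrow> real^'n" where
  "beta u x = (\<Sum>k\<in>UNIV. x $ k *\<^sub>R (\<chi> j. real_of_int (u k $ j)))"

definition nker :: "('d::finite \<Rightarrow> int^'n::finite) \<Rightarrow> (real^'d) set" where
  "nker u = {x. beta u x = 0}"

text \<open>A functional \<Sum>_k c_k iota^* e_k on n (c \<in> C^d) vanishes iff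
  \<Sum>_k c_k x_k = 0 for all x \<in> n. mu^{-1}(0):\<close>
definition levelset ::
  "('d::finite \<Rightarrow> int^'n::finite) \<Rightarrow> ('d \<Rightarrow> real) \<Rightarrow> ('d \<Rightarrow> real) \<Rightarrow> ('d \<Rightarrow> real)
     \<Rightarrow> ((complex^'d) \<times> (complex^'d)) set" where
  "levelset u lam1 lam2 lam3 = {(z, w).
     \<forall>x \<in> nker u.
       (\<Sum>k\<in>UNIV. x $ k * ((cmod (z $ k))\<^sup>2 + (cmod (w $ k))\<^sup>2) / 2 + x $ k * lam1 k) = 0 \<and>
       (\<Sum>k\<in>UNIV. complex_of_real (x $ k) *
           (\<i> * z $ k * cnj (w $ k) + Complex (lam2 k) (lam3 k))) = 0}"

text \<open>M = mu^{-1}(0)/N with the quotient topology; points are N-orbits.\<close>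
definition orbitN :: "('d::finite \<Rightarrow> int^'n::finite) \<Rightarrow> ((complex^'d) \<times> (complex^'d))
     \<Rightarrow> ((complex^'d) \<times> (complex^'d)) set" where
  "orbitN u p = (\<lambda>t. tact t p) ` Nsub u"

definition Mspace ::
  "('d::finite \<Rightarrow> int^'n::finite) \<Rightarrow> ('d \<Rightarrow> real) \<Rightarrow> ('d \<Rightarrow> real) \<Rightarrow> ('d \<Rightarrow> real)
     \<Rightarrow> ((complex^'d) \<times> (complex^'d)) set topology" where
  "Mspace u lam1 lam2 lam3 = quot_topology (top_of_set (levelset u lam1 lam2 lam3)) (orbitN u)"

definition acoord :: "('d::finite \<Rightarrow> int^'n::finite) \<Rightarrow> ('d \<Rightarrow> real) \<Rightarrow> real^'n \<Rightarrow> 'd \<Rightarrow> real" where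
  "acoord u lam1 a k = (\<Sum>j\<in>UNIV. a $ j * real_of_int (u k $ j)) - lam1 k"

definition bcoord :: "('d::finite \<Rightarrow> int^'n::finite) \<Rightarrow> ('d \<Rightarrow> real) \<Rightarrow> ('d \<Rightarrow> real)
     \<Rightarrow> complex^'n \<Rightarrow> 'd \<Rightarrow> complex" where
  "bcoord u lam2 lam3 b k = (\<Sum>j\<in>UNIV. b $ j * of_int (u k $ j)) - Complex (lam2 k) (lam3 k)"

definition Kset :: "('d::finite \<Rightarrow> int^'n::finite) \<Rightarrow> ('d \<Rightarrow> real) \<Rightarrow> ('d \<Rightarrow> real) \<Rightarrow> ('d \<Rightarrow> real)
     \<Rightarrow> ((real^'n) \<times> (complex^'n)) set" where
  "Kset u lam1 lam2 lam3 = {(a, b). \<forall>k. acoord u lam1 a k \<ge> cmod (bcoord u lam2 lam3 b k)}"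

end

theory Submission
  imports Defs
begin

lemma real_fiber:
  fixes a b a' b' :: real
  assumes "a \<ge> 0" "b \<ge> 0" "a' \<ge> 0" "b' \<ge> 0" "a*b = a'*b'" "a^2+b^2 = a'^2+b'^2"
    and "(a \<le> b \<and> a' \<le> b') \<or> (b \<le> a \<and> b' \<le> a')"
  shows "a = a' \<and> b = b'"
proof -
  have 1: "(a+b)^2 = (a'+b')^2" using assms(5,6) by (simp add: power2_sum)
  have "a+b = a'+b'" using 1 assms(1-4)
    by (metis add_nonneg_nonneg power2_eq_iff_nonneg)
  moreover have "(a-b)^2 = (a'-b')^2" using assms(5,6) by (simp add: power2_diff)
  then have "\<bar>a-b\<bar> = \<bar>a'-b'\<bar>" by (metis abs_power2 power2_abs real_sqrt_abs)
  ultimately show ?thesis using assms(7) by auto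
qed

lemma scalar_fiber:
  fixes z w z' w' :: complex
  assumes "z * cnj w = z' * cnj w'" "(cmod z)^2 + (cmod w)^2 = (cmod z')^2 + (cmod w')^2"
    and "(cmod z \<le> cmod w \<and> cmod z' \<le> cmod w') \<or> (cmod w \<le> cmod z \<and> cmod w' \<le> cmod z')"
  shows "\<exists>t. cmod t = 1 \<and> z' = t * z \<and> w' = t * w"
proof -
  have "cmod z * cmod w = cmod z' * cmod w'"
    using arg_cong[OF assms(1), of cmod] by (simp add: norm_mult)
  then have e: "cmod z = cmod z' \<and> cmod w = cmod w'"
    using real_fiber[of "cmod z" "cmod w" "cmod z'" "cmod w'"] assms by auto
  show ?thesis
  proof (cases "z = 0")
    case False
    define t where "t = z' / z"
    have "cmod t = cmod z' / cmod z" by (simp add: t_def norm_divide)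
    then have t1: "cmod t = 1" using e False by (metis divide_self norm_eq_zero)
    have zt: "z' = t * z" using False by (simp add: t_def)
    have "cnj t * t = 1" using t1 by (metis complex_norm_square mult.commute of_real_1 power_one complex_mult_cnj)
    have "z * cnj w = t * z * cnj w'" using assms(1) zt by simp
    then have "cnj w = t * cnj w'" using False by (simp add: mult.commute mult.left_commute)
    then have "cnj t * cnj w = cnj w'" using \<open>cnj t * t = 1\<close> by (metis mult.assoc mult_1)
    then have "w' = t * w" by (metis complex_cnj_cnj complex_cnj_mult)
    then show ?thesis using t1 zt by blast
  next
    case True
    then have z': "z' = 0" using e by simp
    show ?thesis
    proof (cases "w = 0")
      case True
      then have "w' = 0" using e by simp
      then show ?thesis using True \<open>z = 0\<close> z' by (intro exI[of _ 1]) auto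
    next
      case False
      define t where "t = w' / w"
      have "cmod t = cmod w' / cmod w" by (simp add: t_def norm_divide)
      then have "cmod t = 1" using e False by (metis divide_self norm_eq_zero)
      moreover have "w' = t * w" using False by (simp add: t_def)
      ultimately show ?thesis using z' \<open>z = 0\<close> by auto
    qed
  qed
qed

lemma scalar_real:
  fixes \<alpha> :: real and \<gamma> :: complex
  assumes "cmod \<gamma> \<le> \<alpha>"
  shows "\<exists>z w. ((cmod z)^2 + (cmod w)^2)/2 = \<alpha> \<and> \<i> * z * cnj w = \<gamma> \<and> cmod w \<le> cmod z"
proof -
  define s where "s = sqrt (\<alpha>^2 - (cmod \<gamma>)^2)"
  have a0: "\<alpha> \<ge> 0" using assms norm_ge_zero order_trans by blast
  have "(cmod \<gamma>)^2 \<le> \<alpha>^2" using assms by (simp add: power_mono)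
  then have s0: "s \<ge> 0" and s2: "s^2 = \<alpha>^2 - (cmod \<gamma>)^2" by (auto simp: s_def)
  define r where "r = sqrt (\<alpha> + s)"
  have "0 \<le> \<alpha> + s" using a0 s0 by linarith
  then have r2: "r^2 = \<alpha> + s" by (simp add: r_def)
  have r0: "r \<ge> 0" unfolding r_def by (rule real_sqrt_ge_zero) fact
  define z where "z = complex_of_real r"
  define w where "w = \<i> * cnj \<gamma> / complex_of_real r"
  show ?thesis
  proof (cases "r = 0")
    case True
    then have "\<alpha> = 0" using r2 a0 s0 by auto
    then have "\<gamma> = 0" using assms by auto
    then show ?thesis using \<open>\<alpha> = 0\<close> by (intro exI[of _ 0]) auto
  next
    case False
    have cw: "cmod w = cmod \<gamma> / r" using r0 by (simp add: w_def norm_divide norm_mult)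
    have "\<i> * z * cnj w = \<gamma>" using False by (simp add: z_def w_def)
    moreover have "((cmod z)^2 + (cmod w)^2)/2 = \<alpha>"
    proof -
      have "(cmod z)^2 + (cmod w)^2 = r^2 + (cmod \<gamma>)^2 / r^2" using r0 cw
        by (simp add: z_def power_divide)
      also have "\<dots> = (r^2 * r^2 + (cmod \<gamma>)^2) / r^2" using False by (simp add: field_simps)
      also have "r^2 * r^2 + (cmod \<gamma>)^2 = 2 * \<alpha> * r^2" using r2 s2 by (simp add: power2_eq_square algebra_simps)
      finally show ?thesis using False by simp
    qed
    moreover have "cmod w \<le> cmod z"
    proof -
      have "cmod \<gamma> \<le> r * r"
        using r2 assms s0 by (simp add: power2_eq_square)
      then have "cmod \<gamma> / r \<le> r" using False r0 by (simp add: divide_le_eq)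
      then show ?thesis using cw r0 by (simp add: z_def)
    qed
    ultimately show ?thesis by blast
  qed
qed

definition alp :: "(complex^'d::finite) \<times> (complex^'d) \<Rightarrow> real^'d" where
  "alp p = (\<chi> k. ((cmod (fst p $ k))^2 + (cmod (snd p $ k))^2)/2)"
definition gam :: "(complex^'d::finite) \<times> (complex^'d) \<Rightarrow> complex^'d" where
  "gam p = (\<chi> k. \<i> * fst p $ k * cnj (snd p $ k))"
definition psi :: "(complex^'d::finite) \<times> (complex^'d) \<Rightarrow> (real^'d) \<times> (complex^'d)" where
  "psi p = (alp p, gam p)"
definition RF :: "'d::finite set \<Rightarrow> ((complex^'d) \<times> (complex^'d)) set" where
  "RF F = {p. \<forall>k. (k \<in> F \<longrightarrow> cmod (fst p $ k) \<le> cmod (snd p $ k)) \<and>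
                  (k \<notin> F \<longrightarrow> cmod (snd p $ k) \<le> cmod (fst p $ k))}"

lemma torus_conn: "connected (torus :: (complex^'d::finite) set)"
proof -
  have "torus = range (\<lambda>\<theta>::real^'d. \<chi> k. cis (\<theta> $ k))"
  proof (intro set_eqI iffI)
    fix t :: "complex^'d" assume "t \<in> torus"
    then have "\<And>k. cmod (t $ k) = 1" by (simp add: torus_def)
    then have "\<And>k. cis (Arg (t $ k)) = t $ k"
    proof -
      fix k
      have "t $ k \<noteq> 0" using \<open>\<And>k. cmod (t $ k) = 1\<close>[of k] by auto
      then show "cis (Arg (t $ k)) = t $ k" using \<open>\<And>k. cmod (t $ k) = 1\<close>[of k]
        by (simp add: cis_Arg sgn_eq)
    qed
    then have "t = (\<chi> k. cis ((\<chi> k. Arg (t $ k)) $ k))" by (simp add: vec_eq_iff)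
    then show "t \<in> range (\<lambda>\<theta>::real^'d. \<chi> k. cis (\<theta> $ k))" by blast
  qed (auto simp: torus_def)
  moreover have "continuous_on UNIV (\<lambda>\<theta>::real^'d. \<chi> k. cis (\<theta> $ k))"
    by (intro continuous_intros)
  then have "connected (range (\<lambda>\<theta>::real^'d. \<chi> k. cis (\<theta> $ k)))"
    by (rule connected_continuous_image[OF _ connected_UNIV])
  ultimately show ?thesis by simp
qed

lemma cont_tact: "continuous_on UNIV (\<lambda>t. tact t p)"
  unfolding tact_def by (intro continuous_intros)

lemma cont_psi: "continuous_on UNIV (psi :: (complex^'d::finite) \<times> (complex^'d) \<Rightarrow> _)"
  unfolding psi_def alp_def gam_def by (intro continuous_intros) auto

lemma torus_unit: "t \<in> torus \<Longrightarrow> t $ k * cnj (t $ k) = 1"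
proof -
  assume "t \<in> torus"
  then have "cmod (t $ k) = 1" by (simp add: torus_def)
  then have "complex_of_real ((cmod (t $ k))^2) = 1" by simp
  then show ?thesis by (simp only: complex_norm_square)
qed

lemma psi_tact: "t \<in> torus \<Longrightarrow> psi (tact t p) = psi p"
proof -
  assume t: "t \<in> torus"
  then have n: "\<And>k. cmod (t $ k) = 1" by (simp add: torus_def)
  have "\<And>k. \<i> * (t $ k * fst p $ k) * cnj (t $ k * snd p $ k) = \<i> * fst p $ k * cnj (snd p $ k)"
  proof -
    fix k
    have "\<i> * (t $ k * fst p $ k) * cnj (t $ k * snd p $ k) =
          (t $ k * cnj (t $ k)) * (\<i> * fst p $ k * cnj (snd p $ k))" by simp
    then show "?thesis k" using torus_unit[OF t] by simp
  qed
  note star = this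
  have g: "gam (tact t p) = gam p" unfolding vec_eq_iff
  proof
    fix k
    have "gam (tact t p) $ k = \<i> * (t $ k * fst p $ k) * cnj (t $ k * snd p $ k)" by (simp add: gam_def tact_def)
    also have "\<dots> = gam p $ k" by (simp only: star) (simp add: gam_def)
    finally show "gam (tact t p) $ k = gam p $ k" .
  qed
  have a: "alp (tact t p) = alp p" by (simp add: alp_def tact_def norm_mult n)
  show ?thesis by (simp add: psi_def a g)
qed

lemma RF_tact: "t \<in> torus \<Longrightarrow> p \<in> RF F \<Longrightarrow> tact t p \<in> RF F"
proof -
  assume t: "t \<in> torus" and p: "p \<in> RF F"
  then have n: "\<And>k. cmod (t $ k) = 1" by (simp add: torus_def)
  show ?thesis using p unfolding RF_def tact_def by (simp add: norm_mult n)
qed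

lemma RF_fiber:
  assumes "p \<in> RF F" "q \<in> RF F" "psi p = psi q"
  shows "\<exists>t\<in>torus. q = tact t p"
proof -
  have "\<forall>k. \<exists>t. cmod t = 1 \<and> fst q $ k = t * fst p $ k \<and> snd q $ k = t * snd p $ k"
  proof
    fix k
    have a: "alp p $ k = alp q $ k" and g: "gam p $ k = gam q $ k" using assms(3) by (auto simp: psi_def)
    show "\<exists>t. cmod t = 1 \<and> fst q $ k = t * fst p $ k \<and> snd q $ k = t * snd p $ k"
    proof (rule scalar_fiber)
      show "fst p $ k * cnj (snd p $ k) = fst q $ k * cnj (snd q $ k)" using g by (simp add: gam_def)
      show "(cmod (fst p $ k))\<^sup>2 + (cmod (snd p $ k))\<^sup>2 = (cmod (fst q $ k))\<^sup>2 + (cmod (snd q $ k))\<^sup>2"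
        using a by (simp add: alp_def)
      show "cmod (fst p $ k) \<le> cmod (snd p $ k) \<and> cmod (fst q $ k) \<le> cmod (snd q $ k) \<or>
            cmod (snd p $ k) \<le> cmod (fst p $ k) \<and> cmod (snd q $ k) \<le> cmod (fst q $ k)"
        using assms(1,2) by (cases "k \<in> F") (auto simp: RF_def)
    qed
  qed
  then obtain f where f: "\<And>k. cmod (f k) = 1 \<and> fst q $ k = f k * fst p $ k \<and> snd q $ k = f k * snd p $ k"
    by metis
  define t where "t = (\<chi> k. f k)"
  have "t \<in> torus" using f by (simp add: t_def torus_def)
  moreover have "q = tact t p"
  proof (rule prod_eqI)
    show "fst q = fst (tact t p)" using f by (simp add: tact_def t_def vec_eq_iff)
    show "snd q = snd (tact t p)" using f by (simp add: tact_def t_def vec_eq_iff)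
  qed
  ultimately show ?thesis by blast
qed

lemma RF_fiber_eq:
  assumes "p \<in> RF F"
  shows "RF F \<inter> psi -` {psi p} = (\<lambda>t. tact t p) ` torus"
proof (intro set_eqI iffI)
  fix x assume x: "x \<in> RF F \<inter> psi -` {psi p}"
  then have x1: "x \<in> RF F" by (rule IntD1)
  from x have x2: "psi p = psi x" by simp
  from RF_fiber[OF assms x1 x2] obtain t where "t \<in> torus" "x = tact t p" by blast
  then show "x \<in> (\<lambda>t. tact t p) ` torus" by (rule rev_image_eqI)
next
  fix x assume "x \<in> (\<lambda>t. tact t p) ` torus"
  then obtain t where t: "t \<in> torus" "x = tact t p" by (rule imageE)
  have "x \<in> RF F" using RF_tact[OF t(1) assms] t(2) by simp
  moreover have "psi x = psi p" using psi_tact[OF t(1), of p] t(2) by simp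
  ultimately show "x \<in> RF F \<inter> psi -` {psi p}" by simp
qed

lemma RF_fiber_conn:
  assumes "p \<in> RF F"
  shows "connected (RF F \<inter> psi -` {psi p})"
  unfolding RF_fiber_eq[OF assms]
  by (rule connected_continuous_image[OF continuous_on_subset[OF cont_tact] torus_conn]) simp

lemma closed_RF: "closed (RF (F::'d::finite set))"
proof -
  define f1 where "f1 (k::'d) = (if k \<in> F then (\<lambda>p::(complex^'d) \<times> (complex^'d). cmod (fst p $ k)) else (\<lambda>p. cmod (snd p $ k)))" for k
  define f2 where "f2 (k::'d) = (if k \<in> F then (\<lambda>p::(complex^'d) \<times> (complex^'d). cmod (snd p $ k)) else (\<lambda>p. cmod (fst p $ k)))" for k
  have "RF F = {p. \<forall>k. f1 k p \<le> f2 k p}" by (auto simp: RF_def f1_def f2_def)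
  moreover have "closed {p. f1 k p \<le> f2 k p}" for k
    by (rule closed_Collect_le) (simp_all add: f1_def f2_def continuous_on_norm continuous_on_component continuous_on_fst continuous_on_snd continuous_on_id)
  ultimately show ?thesis by (simp add: closed_Collect_all)
qed

lemma closed_psi_img:
  fixes C :: "((complex^'d::finite) \<times> (complex^'d)) set"
  assumes "closed C"
  shows "closed (psi ` C)"
proof -
  have "closure (psi ` C) \<subseteq> psi ` C"
  proof
    fix y assume y: "y \<in> closure (psi ` C)"
    define C' where "C' = C \<inter> psi -` cball y 1"
    have "closed (psi -` cball y 1)" by (rule closed_vimage[OF closed_cball cont_psi])
    then have cC': "closed C'" using assms by (simp add: C'_def closed_Int)
    define R where "R = norm y + 1"
    have bnd: "norm x \<le> sqrt (2 * real CARD('d) * R)" if x: "x \<in> C'" for x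
    proof -
      have "dist y (psi x) \<le> 1" using x by (simp add: C'_def)
      then have "norm (psi x - y) \<le> 1" by (simp add: dist_norm norm_minus_commute)
      moreover have "norm (psi x) \<le> norm y + norm (psi x - y)"
        by (metis add.commute diff_add_cancel norm_triangle_ineq)
      ultimately have "norm (psi x) \<le> R" by (simp add: R_def)
      moreover have "norm (alp x) \<le> norm (psi x)" unfolding psi_def by (rule norm_fst_le)
      ultimately have aR: "alp x $ k \<le> R" for k
        by (smt (verit) component_le_norm_cart)
      have nz: "(norm (fst x))^2 = (\<Sum>k\<in>UNIV. (cmod (fst x $ k))^2)"
        by (simp add: norm_vec_def L2_set_def sum_nonneg)
      have nw: "(norm (snd x))^2 = (\<Sum>k\<in>UNIV. (cmod (snd x $ k))^2)"
        by (simp add: norm_vec_def L2_set_def sum_nonneg)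
      have "(norm x)^2 = (norm (fst x))^2 + (norm (snd x))^2"
        by (metis norm_Pair prod.collapse real_sqrt_pow2 add_nonneg_nonneg zero_le_power2)
      also have "\<dots> = (\<Sum>k\<in>UNIV. 2 * alp x $ k)"
      proof -
        have "\<And>k. 2 * alp x $ k = (cmod (fst x $ k))^2 + (cmod (snd x $ k))^2" by (simp add: alp_def)
        then show ?thesis by (simp add: nz nw sum.distrib[symmetric])
      qed
      also have "\<dots> \<le> (\<Sum>k\<in>(UNIV::'d set). 2 * R)"
        by (rule sum_mono) (simp add: aR)
      also have "\<dots> = 2 * real CARD('d) * R" by simp
      finally show ?thesis by (rule real_le_rsqrt)
    qed
    then have "bounded C'" unfolding bounded_iff by blast
    then have "compact C'" using cC' by (simp add: compact_eq_bounded_closed)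
    then have "compact (psi ` C')"
      by (rule compact_continuous_image[OF continuous_on_subset[OF cont_psi], rotated]) simp
    then have cl: "closed (psi ` C')" by (rule compact_imp_closed)
    have "y \<in> closure (psi ` C')"
      unfolding closure_approachable
    proof (intro allI impI)
      fix e :: real assume "e > 0"
      then obtain x where "x \<in> psi ` C" "dist x y < min e 1"
        using y unfolding closure_approachable by (metis min_less_iff_conj zero_less_one)
      then show "\<exists>x\<in>psi ` C'. dist x y < e"
        by (auto simp: C'_def dist_commute)
    qed
    then have "y \<in> psi ` C'" using cl by (simp add: closure_closed)
    then show "y \<in> psi ` C" by (auto simp: C'_def)
  qed
  then show ?thesis by (simp add: closure_subset_eq)
qed

definition Qset :: "('d::finite \<Rightarrow> int^'n::finite) \<Rightarrow> ('d \<Rightarrow> real) \<Rightarrow> ('d \<Rightarrow> real) \<Rightarrow> ('d \<Rightarrow> real)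
     \<Rightarrow> ((real^'d) \<times> (complex^'d)) set" where
  "Qset u lam1 lam2 lam3 = {(a, g).
     (\<forall>x \<in> nker u. (\<Sum>k\<in>UNIV. x $ k * a $ k + x $ k * lam1 k) = 0 \<and>
       (\<Sum>k\<in>UNIV. complex_of_real (x $ k) * (g $ k + Complex (lam2 k) (lam3 k))) = 0) \<and>
     (\<forall>k. cmod (g $ k) \<le> a $ k)}"

lemma amgm: "cmod (\<i> * z * cnj w) \<le> ((cmod z)^2 + (cmod w)^2)/2"
proof -
  have "2 * cmod z * cmod w \<le> (cmod z)^2 + (cmod w)^2" by (rule sum_squares_bound)
  then show ?thesis by (simp add: norm_mult)
qed

lemma levelset_eq:
  fixes u :: "'d::finite \<Rightarrow> int^'n::finite"
  shows "levelset u lam1 lam2 lam3 = psi -` Qset u lam1 lam2 lam3"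
proof (intro set_eqI)
  fix p :: "(complex^'d) \<times> (complex^'d)"
  obtain z w where p: "p = (z, w)" by fastforce
  have s1: "(\<Sum>k\<in>UNIV. x $ k * ((cmod (z $ k))\<^sup>2 + (cmod (w $ k))\<^sup>2) / 2 + x $ k * lam1 k) =
            (\<Sum>k\<in>UNIV. x $ k * alp p $ k + x $ k * lam1 k)" for x :: "real^'d"
    by (simp add: alp_def p)
  have s2: "(\<Sum>k\<in>UNIV. complex_of_real (x $ k) * (\<i> * z $ k * cnj (w $ k) + Complex (lam2 k) (lam3 k))) =
            (\<Sum>k\<in>UNIV. complex_of_real (x $ k) * (gam p $ k + Complex (lam2 k) (lam3 k)))" for x :: "real^'d"
    by (simp add: gam_def p)
  have s3: "cmod (gam p $ k) \<le> alp p $ k" for k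
    using amgm by (simp add: gam_def alp_def p)
  show "p \<in> levelset u lam1 lam2 lam3 \<longleftrightarrow> p \<in> psi -` Qset u lam1 lam2 lam3"
    unfolding levelset_def Qset_def psi_def using s1 s2 s3 by (simp add: p)
qed

lemma convex_Qset:
  fixes u :: "'d::finite \<Rightarrow> int^'n::finite"
  shows "convex (Qset u lam1 lam2 lam3)"
  unfolding convex_def
proof (intro ballI allI impI)
  fix P Q :: "(real^'d) \<times> (complex^'d)" and s t :: real
  assume P: "P \<in> Qset u lam1 lam2 lam3" and Q: "Q \<in> Qset u lam1 lam2 lam3"
    and st: "0 \<le> s" "0 \<le> t" "s + t = 1"
  obtain a g where Pd: "P = (a, g)" by fastforce
  obtain a' g' where Qd: "Q = (a', g')" by fastforce
  have e1: "(\<Sum>k\<in>UNIV. x $ k * (s * a $ k + t * a' $ k) + x $ k * lam1 k) =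
        s * (\<Sum>k\<in>UNIV. x $ k * a $ k + x $ k * lam1 k) + t * (\<Sum>k\<in>UNIV. x $ k * a' $ k + x $ k * lam1 k)"
    for x :: "real^'d"
  proof -
    have "(\<Sum>k\<in>UNIV. x $ k * (s * a $ k + t * a' $ k) + x $ k * lam1 k) =
          (\<Sum>k\<in>UNIV. s * (x $ k * a $ k + x $ k * lam1 k) + t * (x $ k * a' $ k + x $ k * lam1 k))"
    proof (rule sum.cong)
      fix k
      have t': "t = 1 - s" using st(3) by simp
      show "x $ k * (s * a $ k + t * a' $ k) + x $ k * lam1 k =
          s * (x $ k * a $ k + x $ k * lam1 k) + t * (x $ k * a' $ k + x $ k * lam1 k)"
        unfolding t' by (simp add: algebra_simps)
    qed simp
    note eq = this
    show ?thesis unfolding eq by (simp add: sum.distrib sum_distrib_left distrib_left)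
  qed
  have e2: "(\<Sum>k\<in>UNIV. complex_of_real (x $ k) * ((of_real s * g $ k + of_real t * g' $ k) + Complex (lam2 k) (lam3 k))) =
        of_real s * (\<Sum>k\<in>UNIV. complex_of_real (x $ k) * (g $ k + Complex (lam2 k) (lam3 k))) +
        of_real t * (\<Sum>k\<in>UNIV. complex_of_real (x $ k) * (g' $ k + Complex (lam2 k) (lam3 k)))"
    for x :: "real^'d"
  proof -
    have st': "complex_of_real s + complex_of_real t = 1" using st(3) by (metis of_real_1 of_real_add)
    have "(\<Sum>k\<in>UNIV. complex_of_real (x $ k) * ((of_real s * g $ k + of_real t * g' $ k) + Complex (lam2 k) (lam3 k))) =
          (\<Sum>k\<in>UNIV. of_real s * (complex_of_real (x $ k) * (g $ k + Complex (lam2 k) (lam3 k))) +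
              of_real t * (complex_of_real (x $ k) * (g' $ k + Complex (lam2 k) (lam3 k))))"
    proof (rule sum.cong)
      fix k
      have t': "complex_of_real t = 1 - complex_of_real s" using st' by (simp add: eq_diff_eq add.commute)
      show "complex_of_real (x $ k) * ((of_real s * g $ k + of_real t * g' $ k) + Complex (lam2 k) (lam3 k)) =
          of_real s * (complex_of_real (x $ k) * (g $ k + Complex (lam2 k) (lam3 k))) +
              of_real t * (complex_of_real (x $ k) * (g' $ k + Complex (lam2 k) (lam3 k)))"
        unfolding t' by (simp add: algebra_simps)
    qed simp
    note eq = this
    show ?thesis unfolding eq by (simp add: sum.distrib sum_distrib_left distrib_left)
  qed
  have ineq: "cmod (of_real s * g $ k + of_real t * g' $ k) \<le> s * a $ k + t * a' $ k" for k
  proof -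
    have "cmod (of_real s * g $ k + of_real t * g' $ k) \<le> cmod (of_real s * g $ k) + cmod (of_real t * g' $ k)"
      by (rule norm_triangle_ineq)
    also have "\<dots> = s * cmod (g $ k) + t * cmod (g' $ k)" using st by (simp add: norm_mult)
    also have "\<dots> \<le> s * a $ k + t * a' $ k"
      using P Q st by (auto simp: Qset_def Pd Qd intro!: add_mono mult_left_mono)
    finally show ?thesis .
  qed
  define P' where "P' = s *\<^sub>R P + t *\<^sub>R Q"
  have f: "fst P' $ k = s * a $ k + t * a' $ k" for k by (simp add: P'_def Pd Qd)
  have g: "snd P' $ k = of_real s * g $ k + of_real t * g' $ k" for k
    by (simp add: P'_def Pd Qd) (simp add: scaleR_conv_of_real)
  obtain A G where PG: "P' = (A, G)" by fastforce
  have fA: "A $ k = s * a $ k + t * a' $ k" for k using f[of k] PG by simp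
  have gG: "G $ k = of_real s * g $ k + of_real t * g' $ k" for k using g[of k] PG by simp
  have "(A, G) \<in> Qset u lam1 lam2 lam3"
    using P Q ineq unfolding Pd Qd Qset_def
    by (simp add: e1 e2 fA gG)
  then show "s *\<^sub>R P + t *\<^sub>R Q \<in> Qset u lam1 lam2 lam3" by (simp add: PG[symmetric] P'_def)
qed

lemma scalar_real2:
  fixes \<alpha> :: real and \<gamma> :: complex
  assumes "cmod \<gamma> \<le> \<alpha>"
  shows "\<exists>z w. ((cmod z)^2 + (cmod w)^2)/2 = \<alpha> \<and> \<i> * z * cnj w = \<gamma> \<and>
     (b \<longrightarrow> cmod z \<le> cmod w) \<and> (\<not> b \<longrightarrow> cmod w \<le> cmod z)"
proof -
  obtain z w where zw: "((cmod z)^2 + (cmod w)^2)/2 = \<alpha>" "\<i> * z * cnj w = \<gamma>" "cmod w \<le> cmod z"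
    using scalar_real[OF assms] by blast
  show ?thesis
  proof (cases b)
    case True
    have "((cmod (cnj w))^2 + (cmod (cnj z))^2)/2 = \<alpha>" using zw(1) by simp
    moreover have "\<i> * cnj w * cnj (cnj z) = \<gamma>" using zw(2) by (simp add: mult.commute mult.left_commute)
    ultimately show ?thesis using True zw(3) by (intro exI[of _ "cnj w"] exI[of _ "cnj z"]) simp
  next
    case False
    then show ?thesis using zw by blast
  qed
qed

lemma realize:
  fixes F :: "'d::finite set"
  assumes "\<And>k. cmod (g $ k) \<le> a $ k"
  shows "\<exists>p \<in> RF F. psi p = (a, g)"
proof -
  have "\<forall>k. \<exists>zw. ((cmod (fst zw))^2 + (cmod (snd zw))^2)/2 = a $ k \<and> \<i> * fst zw * cnj (snd zw) = g $ k \<and>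
     (k \<in> F \<longrightarrow> cmod (fst zw) \<le> cmod (snd zw)) \<and> (k \<notin> F \<longrightarrow> cmod (snd zw) \<le> cmod (fst zw))"
    (is "\<forall>k. \<exists>zw. ?P k zw")
  proof
    fix k
    obtain z w where zw: "((cmod z)^2 + (cmod w)^2)/2 = a $ k" "\<i> * z * cnj w = g $ k"
      "(k \<in> F \<longrightarrow> cmod z \<le> cmod w)" "(k \<notin> F \<longrightarrow> cmod w \<le> cmod z)"
      using scalar_real2[OF assms[of k], of "k \<in> F"] by blast
    show "\<exists>zw. ?P k zw" by (rule exI[of _ "(z, w)"]) (simp add: zw)
  qed
  from choice[OF this] obtain f where f0: "\<forall>k. ?P k (f k)" ..
  have f: "?P k (f k)" for k using f0 by (rule spec)
  define p where "p = ((\<chi> k. fst (f k)), (\<chi> k. snd (f k)))"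
  have "p \<in> RF F" using f by (simp add: p_def RF_def)
  moreover have "alp p = a" using f by (simp add: p_def alp_def vec_eq_iff)
  moreover have "gam p = g" using f by (simp add: p_def gam_def vec_eq_iff)
  ultimately show ?thesis by (auto simp: psi_def)
qed

lemma LF_conn:
  fixes F :: "'d::finite set" and u :: "'d \<Rightarrow> int^'n::finite"
  shows "connected (RF F \<inter> levelset u lam1 lam2 lam3)"
  unfolding levelset_eq
proof (rule connected_closed_monotone_preimage)
  show "continuous_on (RF F) psi" by (rule continuous_on_subset[OF cont_psi]) simp
  show "psi ` RF F = psi ` RF F" ..
  show "closedin (top_of_set (psi ` RF F)) (psi ` C)" if "closedin (top_of_set (RF F)) C" for C
  proof -
    have "closed C" using that closed_RF closedin_closed_trans by blast
    then have "closed (psi ` C)" by (rule closed_psi_img)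
    moreover have "psi ` C \<subseteq> psi ` RF F" using closedin_subset[OF that] by auto
    ultimately show ?thesis by (simp add: closed_subset)
  qed
  show "connected (RF F \<inter> psi -` {y})" if "y \<in> psi ` RF F" for y
    using that RF_fiber_conn by blast
  show "connected (Qset u lam1 lam2 lam3)" by (rule convex_connected[OF convex_Qset])
  show "Qset u lam1 lam2 lam3 \<subseteq> psi ` RF F"
  proof
    fix q assume "q \<in> Qset u lam1 lam2 lam3"
    then obtain a g where "q = (a, g)" "\<And>k. cmod (g $ k) \<le> a $ k" by (auto simp: Qset_def)
    then obtain p where "p \<in> RF F" "psi p = (a, g)" using realize[of g a F] by blast
    then show "q \<in> psi ` RF F" using \<open>q = (a, g)\<close> by (simp add: rev_image_eqI)
  qed
qed

lemma beta_comp: "beta u x $ j = (\<Sum>k\<in>UNIV. x $ k * real_of_int (u k $ j))"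
  by (simp add: beta_def)

lemma LA:
  fixes u :: "'d::finite \<Rightarrow> int^'n::finite" and c :: "real^'d"
  assumes c: "\<forall>x\<in>nker u. (\<Sum>k\<in>UNIV. x $ k * c $ k) = 0"
  shows "\<exists>a::real^'n. \<forall>k. (\<Sum>j\<in>UNIV. a $ j * real_of_int (u k $ j)) = c $ k"
proof -
  define r :: "'n \<Rightarrow> real^'d" where "r j = (\<chi> k. real_of_int (u k $ j))" for j
  define T where "T = range (\<lambda>a::real^'n. \<Sum>j\<in>UNIV. a $ j *\<^sub>R r j)"
  have sub: "subspace T"
    unfolding subspace_def
  proof (intro conjI ballI allI)
    show "0 \<in> T" unfolding T_def by (rule range_eqI[of _ _ 0]) simp
  next
    fix x y assume "x \<in> T" "y \<in> T"
    then obtain a b where "x = (\<Sum>j\<in>UNIV. a $ j *\<^sub>R r j)" "y = (\<Sum>j\<in>UNIV. b $ j *\<^sub>R r j)"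
      unfolding T_def by blast
    then have "x + y = (\<Sum>j\<in>UNIV. (a + b) $ j *\<^sub>R r j)"
      by (simp add: sum.distrib scaleR_add_left)
    then show "x + y \<in> T" unfolding T_def by blast
  next
    fix s :: real and x assume "x \<in> T"
    then obtain a where "x = (\<Sum>j\<in>UNIV. a $ j *\<^sub>R r j)" unfolding T_def by blast
    then have "s *\<^sub>R x = (\<Sum>j\<in>UNIV. (s *\<^sub>R a) $ j *\<^sub>R r j)"
      by (simp add: scaleR_sum_right)
    then show "s *\<^sub>R x \<in> T" unfolding T_def by blast
  qed
  have "r j \<in> T" for j
  proof -
    have "(\<Sum>i\<in>UNIV. (\<chi> i. if i = j then (1::real) else 0) $ i *\<^sub>R r i) = (\<Sum>i\<in>UNIV. if i = j then r i else 0)"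
      by (rule sum.cong) simp_all
    also have "\<dots> = r j" by simp
    finally have eq: "r j = (\<Sum>i\<in>UNIV. (\<chi> i. if i = j then (1::real) else 0) $ i *\<^sub>R r i)" by simp
    show ?thesis unfolding T_def
      by (rule range_eqI[where f="\<lambda>a::real^'n. \<Sum>j\<in>UNIV. a $ j *\<^sub>R r j" and x="\<chi> i. if i = j then (1::real) else 0", OF eq])
  qed
  then have "range r \<subseteq> T" by blast
  then have spT: "span (range r) \<subseteq> T" using sub by (rule span_minimal)
  obtain y z where y: "y \<in> span (range r)" and z: "\<And>w. w \<in> span (range r) \<Longrightarrow> orthogonal z w"
    and cyz: "c = y + z"
    using orthogonal_subspace_decomp_exists[of "range r" c] by blast
  have zr: "z \<bullet> r j = 0" for j using z[of "r j"] by (simp add: span_base orthogonal_def)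
  have "z \<in> nker u"
  proof -
    have "beta u z $ j = 0" for j
    proof -
      have "beta u z $ j = z \<bullet> r j" by (simp add: beta_comp inner_vec_def r_def)
      then show ?thesis using zr by simp
    qed
    then show ?thesis by (simp add: nker_def vec_eq_iff)
  qed
  then have "z \<bullet> c = 0" using c by (simp add: inner_vec_def)
  moreover have "z \<bullet> y = 0" using z[OF y] by (simp add: orthogonal_def)
  ultimately have "z \<bullet> z = 0" using cyz by (simp add: inner_add_right)
  then have "z = 0" by simp
  then have "c \<in> T" using cyz y spT by auto
  then obtain a where "c = (\<Sum>j\<in>UNIV. a $ j *\<^sub>R r j)" unfolding T_def by blast
  then have "\<forall>k. (\<Sum>j\<in>UNIV. a $ j * real_of_int (u k $ j)) = c $ k" by (simp add: r_def)
  then show ?thesis by blast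
qed

lemma K_to_Q:
  fixes u :: "'d::finite \<Rightarrow> int^'n::finite"
  assumes "(a, b) \<in> Kset u lam1 lam2 lam3"
  shows "((\<chi> k. acoord u lam1 a k), (\<chi> k. bcoord u lam2 lam3 b k)) \<in> Qset u lam1 lam2 lam3"
proof -
  have r1: "(\<Sum>k\<in>UNIV. x $ k * (\<chi> k. acoord u lam1 a k) $ k + x $ k * lam1 k) = 0" if x: "x \<in> nker u" for x
  proof -
    have "(\<Sum>k\<in>UNIV. x $ k * (\<chi> k. acoord u lam1 a k) $ k + x $ k * lam1 k) =
          (\<Sum>k\<in>UNIV. \<Sum>j\<in>UNIV. a $ j * (x $ k * real_of_int (u k $ j)))"
      by (rule sum.cong) (simp_all add: acoord_def algebra_simps sum_distrib_left)
    also have "\<dots> = (\<Sum>j\<in>UNIV. \<Sum>k\<in>UNIV. a $ j * (x $ k * real_of_int (u k $ j)))"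
      by (rule sum.swap)
    also have "\<dots> = (\<Sum>j\<in>UNIV. a $ j * beta u x $ j)"
      by (simp add: beta_comp sum_distrib_left)
    also have "\<dots> = 0" using x by (simp add: nker_def)
    finally show ?thesis .
  qed
  have r2: "(\<Sum>k\<in>UNIV. complex_of_real (x $ k) * ((\<chi> k. bcoord u lam2 lam3 b k) $ k + Complex (lam2 k) (lam3 k))) = 0"
    if x: "x \<in> nker u" for x
  proof -
    have "(\<Sum>k\<in>UNIV. complex_of_real (x $ k) * ((\<chi> k. bcoord u lam2 lam3 b k) $ k + Complex (lam2 k) (lam3 k))) =
          (\<Sum>k\<in>UNIV. \<Sum>j\<in>UNIV. b $ j * complex_of_real (x $ k * real_of_int (u k $ j)))"
      by (rule sum.cong) (simp_all add: bcoord_def algebra_simps sum_distrib_left)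
    also have "\<dots> = (\<Sum>j\<in>UNIV. \<Sum>k\<in>UNIV. b $ j * complex_of_real (x $ k * real_of_int (u k $ j)))"
      by (rule sum.swap)
    also have "\<dots> = (\<Sum>j\<in>UNIV. b $ j * complex_of_real (beta u x $ j))"
      by (simp add: beta_comp sum_distrib_left)
    also have "\<dots> = 0" using x by (simp add: nker_def)
    finally show ?thesis .
  qed
  show ?thesis using assms r1 r2 by (simp add: Qset_def Kset_def)
qed

lemma L_to_K:
  fixes u :: "'d::finite \<Rightarrow> int^'n::finite"
  assumes p: "p \<in> levelset u lam1 lam2 lam3" and eqk: "cmod (fst p $ k) = cmod (snd p $ k)"
  shows "\<exists>(a, b) \<in> Kset u lam1 lam2 lam3. acoord u lam1 a k = cmod (bcoord u lam2 lam3 b k)"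
proof -
  have "psi p \<in> Qset u lam1 lam2 lam3" using p levelset_eq by blast
  then have H1: "\<forall>x\<in>nker u. (\<Sum>k\<in>UNIV. x $ k * alp p $ k + x $ k * lam1 k) = 0"
    and H2: "\<forall>x\<in>nker u. (\<Sum>k\<in>UNIV. complex_of_real (x $ k) * (gam p $ k + Complex (lam2 k) (lam3 k))) = 0"
    and H3: "\<forall>k. cmod (gam p $ k) \<le> alp p $ k"
    by (auto simp: Qset_def psi_def)
  have "\<forall>x\<in>nker u. (\<Sum>k\<in>UNIV. x $ k * (\<chi> k. alp p $ k + lam1 k) $ k) = 0"
    using H1 by (simp add: distrib_left)
  then obtain a :: "real^'n" where a: "\<And>k. (\<Sum>j\<in>UNIV. a $ j * real_of_int (u k $ j)) = alp p $ k + lam1 k"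
    using LA[of u] by fastforce
  have "\<forall>x\<in>nker u. (\<Sum>k\<in>UNIV. x $ k * (\<chi> k. Re (gam p $ k) + lam2 k) $ k) = 0"
  proof
    fix x assume "x \<in> nker u"
    then have "Re (\<Sum>k\<in>UNIV. complex_of_real (x $ k) * (gam p $ k + Complex (lam2 k) (lam3 k))) = 0"
      using H2 by simp
    then show "(\<Sum>k\<in>UNIV. x $ k * (\<chi> k. Re (gam p $ k) + lam2 k) $ k) = 0"
      by (simp add: Re_sum)
  qed
  then obtain a1 :: "real^'n" where a1: "\<And>k. (\<Sum>j\<in>UNIV. a1 $ j * real_of_int (u k $ j)) = Re (gam p $ k) + lam2 k"
    using LA[of u] by fastforce
  have "\<forall>x\<in>nker u. (\<Sum>k\<in>UNIV. x $ k * (\<chi> k. Im (gam p $ k) + lam3 k) $ k) = 0"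
  proof
    fix x assume "x \<in> nker u"
    then have "Im (\<Sum>k\<in>UNIV. complex_of_real (x $ k) * (gam p $ k + Complex (lam2 k) (lam3 k))) = 0"
      using H2 by simp
    then show "(\<Sum>k\<in>UNIV. x $ k * (\<chi> k. Im (gam p $ k) + lam3 k) $ k) = 0"
      by (simp add: Im_sum)
  qed
  then obtain a2 :: "real^'n" where a2: "\<And>k. (\<Sum>j\<in>UNIV. a2 $ j * real_of_int (u k $ j)) = Im (gam p $ k) + lam3 k"
    using LA[of u] by fastforce
  define b :: "complex^'n" where "b = (\<chi> j. Complex (a1 $ j) (a2 $ j))"
  have ac: "acoord u lam1 a k = alp p $ k" for k using a[of k] by (simp add: acoord_def)
  have bc: "bcoord u lam2 lam3 b k = gam p $ k" for k
  proof (rule complex_eqI)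
    show "Re (bcoord u lam2 lam3 b k) = Re (gam p $ k)" using a1[of k] by (simp add: bcoord_def b_def Re_sum)
    show "Im (bcoord u lam2 lam3 b k) = Im (gam p $ k)" using a2[of k] by (simp add: bcoord_def b_def Im_sum)
  qed
  have "(a, b) \<in> Kset u lam1 lam2 lam3" using H3 by (simp add: Kset_def ac bc)
  moreover have "acoord u lam1 a k = cmod (bcoord u lam2 lam3 b k)"
    unfolding ac bc using eqk by (simp add: alp_def gam_def norm_mult power2_eq_square)
  ultimately show ?thesis by blast
qed

lemma one_Nsub: "(\<chi> k. 1) \<in> Nsub u"
  by (simp add: Nsub_def torus_def)

lemma tact_one: "tact (\<chi> k. 1) p = p"
  by (simp add: tact_def vec_eq_iff prod_eq_iff)

lemma orbit_same:
  assumes "orbitN u p = orbitN u q"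
  shows "cmod (fst q $ k) = cmod (fst p $ k) \<and> cmod (snd q $ k) = cmod (snd p $ k)"
proof -
  have "q \<in> orbitN u q" unfolding orbitN_def using one_Nsub tact_one by (metis image_eqI)
  then have "q \<in> orbitN u p" using assms by simp
  then obtain t where t: "t \<in> Nsub u" "q = tact t p" unfolding orbitN_def by blast
  then have "cmod (t $ k) = 1" by (simp add: Nsub_def torus_def)
  then show ?thesis using t(2) by (simp add: tact_def norm_mult)
qed

definition sw :: "'d \<Rightarrow> (complex^'d::finite) \<times> (complex^'d) \<Rightarrow> (complex^'d) \<times> (complex^'d)" where
  "sw k p = ((\<chi> j. if j = k then cnj (snd p $ k) else fst p $ j), (\<chi> j. if j = k then cnj (fst p $ k) else snd p $ j))"

lemma psi_sw: "psi (sw k p) = psi p"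
proof -
  have "alp (sw k p) = alp p" by (simp add: alp_def sw_def vec_eq_iff add.commute)
  moreover have "gam (sw k p) = gam p" by (simp add: gam_def sw_def vec_eq_iff mult.commute mult.left_commute)
  ultimately show ?thesis by (simp add: psi_def)
qed

lemma sw_k: "cmod (fst (sw k p) $ k) = cmod (snd p $ k)" "cmod (snd (sw k p) $ k) = cmod (fst p $ k)"
  by (simp_all add: sw_def)

lemma topspace_M: "topspace (Mspace u lam1 lam2 lam3) = orbitN u ` levelset u lam1 lam2 lam3"
proof -
  let ?X = "top_of_set (levelset u lam1 lam2 lam3)"
  have e: "{x \<in> levelset u lam1 lam2 lam3. orbitN u x \<in> orbitN u ` levelset u lam1 lam2 lam3} = levelset u lam1 lam2 lam3"
    by blast
  have "openin (Mspace u lam1 lam2 lam3) (orbitN u ` levelset u lam1 lam2 lam3)"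
    unfolding Mspace_def openin_quot_topology by (simp only: topspace_euclidean_subtopology e) simp
  then have 1: "orbitN u ` levelset u lam1 lam2 lam3 \<subseteq> topspace (Mspace u lam1 lam2 lam3)"
    by (rule openin_subset)
  have "openin (Mspace u lam1 lam2 lam3) (topspace (Mspace u lam1 lam2 lam3))" by simp
  then have 2: "topspace (Mspace u lam1 lam2 lam3) \<subseteq> orbitN u ` levelset u lam1 lam2 lam3"
    unfolding Mspace_def openin_quot_topology by simp
  show ?thesis using 1 2 by blast
qed

lemma quot_M: "quotient_map (top_of_set (levelset u lam1 lam2 lam3)) (Mspace u lam1 lam2 lam3) (orbitN u)"
  unfolding quotient_map_def
proof (intro conjI allI impI)
  show "orbitN u ` topspace (top_of_set (levelset u lam1 lam2 lam3)) = topspace (Mspace u lam1 lam2 lam3)"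
    by (simp add: topspace_M)
  fix U assume "U \<subseteq> topspace (Mspace u lam1 lam2 lam3)"
  then show "openin (top_of_set (levelset u lam1 lam2 lam3))
          {x. x \<in> topspace (top_of_set (levelset u lam1 lam2 lam3)) \<and> orbitN u x \<in> U} =
         openin (Mspace u lam1 lam2 lam3) U"
    unfolding Mspace_def openin_quot_topology by (simp add: topspace_M[unfolded Mspace_def])
qed

lemma eq_from_amgm:
  fixes x y :: real
  assumes "(x^2 + y^2)/2 = x * y"
  shows "x = y"
proof -
  have "(x - y)^2 = 0" using assms by (simp add: power2_diff algebra_simps)
  then show ?thesis by simp
qed

lemma open_lt_k: "open {p :: (complex^'d::finite) \<times> (complex^'d). cmod (fst p $ k) < cmod (snd p $ k)}"
  by (rule open_Collect_less) (intro continuous_intros)+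

lemma open_gt_k: "open {p :: (complex^'d::finite) \<times> (complex^'d). cmod (snd p $ k) < cmod (fst p $ k)}"
  by (rule open_Collect_less) (intro continuous_intros)+

theorem corollary5p4:
  fixes u :: "'d::finite \<Rightarrow> int^'n::finite"
    and lam1 lam2 lam3 :: "'d \<Rightarrow> real"
  assumes span: "span (range (\<lambda>k. (\<chi> j. real_of_int (u k $ j)) :: real^'n)) = UNIV"
    and nonempty: "topspace (Mspace u lam1 lam2 lam3) \<noteq> {}"
  shows "connected_space (Mspace u lam1 lam2 lam3) \<longleftrightarrow>
    (\<forall>k. \<exists>(a, b) \<in> Kset u lam1 lam2 lam3.
        acoord u lam1 a k = cmod (bcoord u lam2 lam3 b k))"
proof -
  let ?L = "levelset u lam1 lam2 lam3" and ?M = "Mspace u lam1 lam2 lam3"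
  have Lne: "?L \<noteq> {}"
  proof
    assume "?L = {}"
    then have "topspace ?M = {}" by (simp only: topspace_M image_empty)
    then show False using nonempty by contradiction
  qed
  then obtain p0 where p0: "p0 \<in> ?L" by blast
  show ?thesis
  proof
    assume conn: "connected_space ?M"
    show "\<forall>k. \<exists>(a, b) \<in> Kset u lam1 lam2 lam3. acoord u lam1 a k = cmod (bcoord u lam2 lam3 b k)"
    proof (rule ccontr)
      assume "\<not> (\<forall>k. \<exists>(a, b) \<in> Kset u lam1 lam2 lam3. acoord u lam1 a k = cmod (bcoord u lam2 lam3 b k))"
      then obtain k where nk: "\<not> (\<exists>(a, b) \<in> Kset u lam1 lam2 lam3. acoord u lam1 a k = cmod (bcoord u lam2 lam3 b k))"
        by blast
      have neq: "cmod (fst p $ k) \<noteq> cmod (snd p $ k)" if "p \<in> ?L" for p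
        using L_to_K[OF that, of k] nk by blast
      define S1 where "S1 = {p \<in> ?L. cmod (fst p $ k) < cmod (snd p $ k)}"
      define S2 where "S2 = {p \<in> ?L. cmod (snd p $ k) < cmod (fst p $ k)}"
      have pre1: "{x \<in> ?L. orbitN u x \<in> orbitN u ` S1} = S1"
      proof (intro set_eqI iffI)
        fix x assume "x \<in> {x \<in> ?L. orbitN u x \<in> orbitN u ` S1}"
        then obtain y where "x \<in> ?L" "y \<in> S1" "orbitN u x = orbitN u y" by blast
        then show "x \<in> S1" using orbit_same[of u y x k] by (simp add: S1_def)
      qed (auto simp: S1_def)
      have pre2: "{x \<in> ?L. orbitN u x \<in> orbitN u ` S2} = S2"
      proof (intro set_eqI iffI)
        fix x assume "x \<in> {x \<in> ?L. orbitN u x \<in> orbitN u ` S2}"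
        then obtain y where "x \<in> ?L" "y \<in> S2" "orbitN u x = orbitN u y" by blast
        then show "x \<in> S2" using orbit_same[of u y x k] by (simp add: S2_def)
      qed (auto simp: S2_def)
      have "S1 = ?L \<inter> {p. cmod (fst p $ k) < cmod (snd p $ k)}" by (auto simp: S1_def)
      then have o1: "openin (top_of_set ?L) S1" using openin_open_Int[OF open_lt_k[of k]] by simp
      have "S2 = ?L \<inter> {p. cmod (snd p $ k) < cmod (fst p $ k)}" by (auto simp: S2_def)
      then have o2: "openin (top_of_set ?L) S2" using openin_open_Int[OF open_gt_k[of k]] by simp
      have O1: "openin ?M (orbitN u ` S1)"
        unfolding Mspace_def openin_quot_topology topspace_euclidean_subtopology pre1
        using o1 by (auto simp: S1_def)
      have O2: "openin ?M (orbitN u ` S2)"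
        unfolding Mspace_def openin_quot_topology topspace_euclidean_subtopology pre2
        using o2 by (auto simp: S2_def)
      have cov: "topspace ?M \<subseteq> orbitN u ` S1 \<union> orbitN u ` S2"
      proof
        fix P assume "P \<in> topspace ?M"
        then obtain p where p: "p \<in> ?L" "P = orbitN u p" using topspace_M by blast
        then have "p \<in> S1 \<or> p \<in> S2" using neq[OF p(1)] by (auto simp: S1_def S2_def)
        then show "P \<in> orbitN u ` S1 \<union> orbitN u ` S2" using p(2) by blast
      qed
      have dis: "orbitN u ` S1 \<inter> orbitN u ` S2 = {}"
      proof (rule ccontr)
        assume "orbitN u ` S1 \<inter> orbitN u ` S2 \<noteq> {}"
        then obtain p q where "p \<in> S1" "q \<in> S2" "orbitN u p = orbitN u q" by blast
        then show False using orbit_same[of u p q k] by (simp add: S1_def S2_def)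
      qed
      have swL: "sw k p0 \<in> ?L" using p0 psi_sw[of k p0] levelset_eq by (metis vimageE vimageI2)
      have ne: "S1 \<noteq> {} \<and> S2 \<noteq> {}"
      proof (cases "p0 \<in> S1")
        case True
        then have "sw k p0 \<in> S2" using swL sw_k[of k p0] by (simp add: S1_def S2_def)
        then show ?thesis using True by blast
      next
        case False
        then have "p0 \<in> S2" using neq[OF p0] p0 by (auto simp: S1_def S2_def)
        then have "sw k p0 \<in> S1" using swL sw_k[of k p0] by (simp add: S1_def S2_def)
        then show ?thesis using \<open>p0 \<in> S2\<close> by blast
      qed
      show False using conn O1 O2 cov dis ne unfolding connected_space_def by blast
    qed
  next
    assume cond: "\<forall>k. \<exists>(a, b) \<in> Kset u lam1 lam2 lam3. acoord u lam1 a k = cmod (bcoord u lam2 lam3 b k)"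
    have "psi p0 \<in> Qset u lam1 lam2 lam3" using p0 levelset_eq by blast
    then obtain \<alpha> \<gamma> where ag: "psi p0 = (\<alpha>, \<gamma>)" "\<And>k. cmod (\<gamma> $ k) \<le> \<alpha> $ k"
      by (cases "psi p0") (auto simp: Qset_def)
    then obtain q0 where q0: "q0 \<in> RF {}" "psi q0 = psi p0" using realize[of \<gamma> \<alpha> "{}"] by auto
    have q0L: "q0 \<in> ?L" using q0(2) p0 levelset_eq by (metis vimageE vimageI2)
    let ?C = "connected_component_set ?L q0"
    have step: "RF F \<inter> ?L \<subseteq> ?C" if "finite F" for F
      using that
    proof (induction F rule: finite_induct)
      case empty
      show ?case
        by (rule connected_component_maximal) (use q0 q0L LF_conn in auto)
    next
      case (insert k F)
      obtain a b where ab: "(a, b) \<in> Kset u lam1 lam2 lam3" "acoord u lam1 a k = cmod (bcoord u lam2 lam3 b k)"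
        using cond by blast
      have qQ: "((\<chi> k. acoord u lam1 a k), (\<chi> k. bcoord u lam2 lam3 b k)) \<in> Qset u lam1 lam2 lam3"
        by (rule K_to_Q[OF ab(1)])
      then obtain p where p: "p \<in> RF F" "psi p = ((\<chi> k. acoord u lam1 a k), (\<chi> k. bcoord u lam2 lam3 b k))"
        using realize[of "\<chi> k. bcoord u lam2 lam3 b k" "\<chi> k. acoord u lam1 a k" F] by (auto simp: Qset_def)
      have pL: "p \<in> ?L" using p(2) qQ levelset_eq by (metis vimageI2)
      have "alp p $ k = cmod (gam p $ k)" using p(2) ab(2) by (simp add: psi_def)
      then have "((cmod (fst p $ k))^2 + (cmod (snd p $ k))^2)/2 = cmod (fst p $ k) * cmod (snd p $ k)"
        by (simp add: alp_def gam_def norm_mult)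
      then have pk: "cmod (fst p $ k) = cmod (snd p $ k)" by (rule eq_from_amgm)
      have pI: "p \<in> RF (insert k F)" using p(1) pk by (auto simp: RF_def)
      have "p \<in> ?C" using insert.IH p(1) pL by blast
      then have Cp: "connected_component_set ?L p = ?C" by (rule connected_component_eq)
      have "RF (insert k F) \<inter> ?L \<subseteq> connected_component_set ?L p"
        by (rule connected_component_maximal) (use pI pL LF_conn in auto)
      then show ?case using Cp by simp
    qed
    have "?L \<subseteq> ?C"
    proof
      fix x assume x: "x \<in> ?L"
      have "x \<in> RF {k. cmod (fst x $ k) < cmod (snd x $ k)}" by (auto simp: RF_def)
      moreover have "finite {k. cmod (fst x $ k) < cmod (snd x $ k)}" by simp
      ultimately show "x \<in> ?C" using step[of "{k. cmod (fst x $ k) < cmod (snd x $ k)}"] x by blast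
    qed
    then have "?C = ?L" using connected_component_subset by blast
    then have "connected ?L" by (metis connected_connected_component)
    then have "connected_space (top_of_set ?L)"
      by (simp add: connected_space_subtopology)
    then show "connected_space ?M" by (rule connected_space_quotient_map_image[OF quot_M])
  qed
qed


end
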